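(* Let $n\geqslant 2$ and write points of $\mathbb{R}^n$ as $(x,y)$ with $x\in\mathbb{R}^{n-1}$, $y\in\mathbb{R}$. Suppose a $C^\infty$-smooth function $\varphi(x,y)$ on $\mathbb{R}^n$ satisfies $\Delta\varphi=0$ in $\mathbb{R}^n$ and $\partial_y\varphi(x,0)=0$ for all $x\in\mathbb{R}^{n-1}$. Then the function \[ w(x,y,t)=\frac{1}{\pi}\int_0^{\pi/2}\varphi\big(x,\sqrt{y^2-t^2}\,\sin s\big)\,ds \] is $C^\infty$-smooth on the set $\{(x,y,t)\,:\,x\in\mathbb{R}^{n-1},\ t\in\mathbb{R},\ y>|t|\}$ and satisfies there the wave equation $\partial_t^2 w-\Delta w=0$.
   Context: $\Delta=\sum_{j=1}^{n-1}\partial_{x_j}^2+\partial_y^2$ is the Laplace operator in the variables $(x,y)\in\mathbb{R}^n$. *)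

theory Defs
  imports "HOL-Analysis.Analysis"
begin

definition dirderiv :: "('a::real_normed_vector \<Rightarrow> real) \<Rightarrow> 'a \<Rightarrow> 'a \<Rightarrow> real" where
  "dirderiv f b p = deriv (\<lambda>s. f (p + s *\<^sub>R b)) 0"

fun Ck_on :: "nat \<Rightarrow> 'a::euclidean_space set \<Rightarrow> ('a \<Rightarrow> real) \<Rightarrow> bool" where
  "Ck_on 0 S f = continuous_on S f"
| "Ck_on (Suc k) S f = (continuous_on S f \<and>
     (\<forall>b\<in>Basis. (\<forall>p\<in>S. (\<lambda>s. f (p + s *\<^sub>R b)) differentiable (at 0))
                 \<and> Ck_on k S (dirderiv f b)))"

definition smooth_on :: "'a::euclidean_space set \<Rightarrow> ('a \<Rightarrow> real) \<Rightarrow> bool" where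
  "smooth_on S f = (\<forall>k. Ck_on k S f)"

definition laplacian :: "('a::euclidean_space \<Rightarrow> real) \<Rightarrow> 'a \<Rightarrow> real" where
  "laplacian f p = (\<Sum>b\<in>Basis. dirderiv (dirderiv f b) b p)"

end

theory Submission
  imports Defs "HOL-Analysis.Analysis"
begin

definition rr :: "real \<Rightarrow> real \<Rightarrow> real" where "rr y t = sqrt (y^2 - t^2)"

lemma sq_pos: "y > \<bar>t\<bar> \<Longrightarrow> y^2 - t^2 > (0::real)"
proof -
  assume "y > \<bar>t\<bar>"
  then have "\<bar>t\<bar>^2 < y^2" by (intro power_strict_mono) auto
  then show ?thesis by simp
qed

lemma rr_pos: "y > \<bar>t\<bar> \<Longrightarrow> rr y t > 0"
  unfolding rr_def using sq_pos by simp

lemma rr_pos': "-y < t \<Longrightarrow> t < y \<Longrightarrow> rr y t > 0"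
  using rr_pos[of t y] by (simp add: abs_less_iff)

lemma rr_sq: "y > \<bar>t\<bar> \<Longrightarrow> (rr y t)^2 = y^2 - t^2"
  unfolding rr_def using sq_pos[of t y] by simp

lemma rr_dy: "y > \<bar>t\<bar> \<Longrightarrow> ((\<lambda>y. rr y t) has_real_derivative y / rr y t) (at y)"
  unfolding rr_def
  apply (rule DERIV_cong)
   apply (rule DERIV_chain2[where f=sqrt, OF DERIV_real_sqrt])
    apply (rule sq_pos, assumption)
   apply (auto intro!: derivative_eq_intros)
  apply (simp add: field_simps)
  done

lemma rr_dt: "y > \<bar>t\<bar> \<Longrightarrow> ((\<lambda>t. rr y t) has_real_derivative - t / rr y t) (at t)"
  unfolding rr_def
  apply (rule DERIV_cong)
   apply (rule DERIV_chain2[where f=sqrt, OF DERIV_real_sqrt])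
    apply (rule sq_pos, assumption)
   apply (auto intro!: derivative_eq_intros)
  apply (simp add: field_simps)
  done

lemma cont_rr[continuous_intros]: "continuous_on S f \<Longrightarrow> continuous_on S g \<Longrightarrow> continuous_on S (\<lambda>q. rr (f q) (g q))"
  unfolding rr_def by (intro continuous_intros)

lemma smooth_cont: "smooth_on UNIV \<psi> \<Longrightarrow> continuous_on UNIV \<psi>"
  unfolding smooth_on_def by (metis Ck_on.simps(1))

lemma smooth_dir: "smooth_on UNIV \<psi> \<Longrightarrow> b\<in>Basis \<Longrightarrow> smooth_on UNIV (dirderiv \<psi> b)"
  unfolding smooth_on_def by (metis Ck_on.simps(2))

lemma smooth_line:
  assumes "smooth_on UNIV \<psi>" "b\<in>Basis"
  shows "((\<lambda>h. \<psi> (z + h *\<^sub>R b)) has_real_derivative dirderiv \<psi> b (z + h0 *\<^sub>R b)) (at h0)"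
proof -
  have "(\<lambda>s. \<psi> ((z + h0 *\<^sub>R b) + s *\<^sub>R b)) differentiable (at 0)"
    using assms unfolding smooth_on_def by (metis Ck_on.simps(2) UNIV_I)
  then have "((\<lambda>s. \<psi> ((z + h0 *\<^sub>R b) + s *\<^sub>R b)) has_real_derivative dirderiv \<psi> b (z + h0 *\<^sub>R b)) (at 0)"
    unfolding dirderiv_def using DERIV_deriv_iff_real_differentiable by blast
  then have "((\<lambda>s. \<psi> (z + (s + h0) *\<^sub>R b)) has_real_derivative dirderiv \<psi> b (z + h0 *\<^sub>R b)) (at 0)"
    by (simp add: scaleR_add_left add.assoc add.commute add.left_commute)
  then show ?thesis using DERIV_shift[where f="\<lambda>h. \<psi> (z + h *\<^sub>R b)" and x=0 and z=h0] by simp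
qed

lemma basis_v: "((0::real^'m), (1::real)) \<in> Basis"
  by (simp add: Basis_prod_def)

lemma basis_e: "e \<in> Basis \<Longrightarrow> ((e::real^'m), (0::real)) \<in> Basis"
  by (simp add: Basis_prod_def)

lemma psi_v:
  fixes \<psi> :: "(real^'m) \<times> real \<Rightarrow> real"
  assumes "smooth_on UNIV \<psi>"
  shows "((\<lambda>v. \<psi> (x, v)) has_real_derivative dirderiv \<psi> (0,1) (x, v0)) (at v0)"
  using smooth_line[OF assms basis_v, of "(x,0)" v0] by simp

lemma psi_e:
  fixes \<psi> :: "(real^'m) \<times> real \<Rightarrow> real"
  assumes "smooth_on UNIV \<psi>" "e \<in> Basis"
  shows "((\<lambda>h. \<psi> (x + h *\<^sub>R e, v)) has_real_derivative dirderiv \<psi> (e,0) (x + h0 *\<^sub>R e, v)) (at h0)"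
  using smooth_line[OF assms(1) basis_e[OF assms(2)], of "(x,v)" h0] by simp


definition II :: "((real^'m) \<times> real \<Rightarrow> real) \<Rightarrow> nat \<Rightarrow> real^'m \<Rightarrow> real \<Rightarrow> real \<Rightarrow> real" where
 "II \<psi> k x y t = integral {0..pi/2} (\<lambda>s. \<psi> (x, rr y t * sin s) * sin s ^ k)"

lemma cont_comp_UNIV: "continuous_on UNIV g \<Longrightarrow> continuous_on S h \<Longrightarrow> continuous_on S (\<lambda>q. g (h q))"
  using continuous_on_compose2[of UNIV g S h] by auto

lemma II_integrable:
  assumes "continuous_on UNIV \<psi>"
  shows "(\<lambda>s. \<psi> (x, rr y t * sin s) * sin s ^ k) integrable_on {0..pi/2}"
  unfolding cbox_interval[symmetric]
  by (intro integrable_continuous continuous_intros cont_comp_UNIV[OF assms])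

lemma II_cont:
  assumes "smooth_on UNIV \<psi>"
  shows "continuous_on S (\<lambda>p::((real^'m) \<times> real) \<times> real. II \<psi> k (fst (fst p)) (snd (fst p)) (snd p))"
proof -
  have c: "continuous_on UNIV \<psi>" using smooth_cont[OF assms] .
  have "continuous_on (S \<times> cbox 0 (pi/2)) (\<lambda>(p::((real^'m) \<times> real) \<times> real, s). \<psi> (fst (fst p), rr (snd (fst p)) (snd p) * sin s) * sin s ^ k)"
    unfolding case_prod_beta'
    by (intro continuous_intros cont_comp_UNIV[OF c])
  from integral_continuous_on_param[OF this] show ?thesis
    unfolding II_def by (simp add: cbox_interval)
qed

lemma II_dx:
  assumes "smooth_on UNIV \<psi>" "e \<in> Basis"
  shows "((\<lambda>h. II \<psi> k (x + h *\<^sub>R e) y t) has_real_derivative II (dirderiv \<psi> (e,0)) k (x + h0 *\<^sub>R e) y t) (at h0)"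
proof -
  have c: "continuous_on UNIV (dirderiv \<psi> (e,0))" using smooth_cont[OF smooth_dir[OF assms(1) basis_e[OF assms(2)]]] .
  have "((\<lambda>h. integral (cbox 0 (pi/2)) (\<lambda>s. \<psi> (x + h *\<^sub>R e, rr y t * sin s) * sin s ^ k)) has_field_derivative
      integral (cbox 0 (pi/2)) (\<lambda>s. dirderiv \<psi> (e,0) (x + h0 *\<^sub>R e, rr y t * sin s) * sin s ^ k)) (at h0 within UNIV)"
  proof (rule leibniz_rule_field_derivative[where fx="\<lambda>h s. dirderiv \<psi> (e,0) (x + h *\<^sub>R e, rr y t * sin s) * sin s ^ k"])
    fix h s
    show "((\<lambda>h. \<psi> (x + h *\<^sub>R e, rr y t * sin s) * sin s ^ k) has_field_derivative dirderiv \<psi> (e,0) (x + h *\<^sub>R e, rr y t * sin s) * sin s ^ k) (at h within UNIV)"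
      by (intro DERIV_cmult_right psi_e assms)
  next
    fix h
    show "(\<lambda>s. \<psi> (x + h *\<^sub>R e, rr y t * sin s) * sin s ^ k) integrable_on cbox 0 (pi/2)"
      by (intro integrable_continuous continuous_intros cont_comp_UNIV[OF smooth_cont[OF assms(1)]])
  next
    show "continuous_on (UNIV \<times> cbox 0 (pi/2)) (\<lambda>(h, s). dirderiv \<psi> (e,0) (x + h *\<^sub>R e, rr y t * sin s) * sin s ^ k)"
      unfolding case_prod_beta' by (intro continuous_intros cont_comp_UNIV[OF c])
  qed auto
  then show ?thesis unfolding II_def by (simp add: cbox_interval)
qed

lemma II_dy:
  assumes "smooth_on UNIV \<psi>" "y > \<bar>t\<bar>"
  shows "((\<lambda>y. II \<psi> k x y t) has_real_derivative y / rr y t * II (dirderiv \<psi> (0,1)) (Suc k) x y t) (at y)"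
proof -
  let ?U = "{\<bar>t\<bar><..}"
  have c: "continuous_on UNIV (dirderiv \<psi> (0,1))" using smooth_cont[OF smooth_dir[OF assms(1) basis_v]] .
  have "((\<lambda>y. integral (cbox 0 (pi/2)) (\<lambda>s. \<psi> (x, rr y t * sin s) * sin s ^ k)) has_field_derivative
      integral (cbox 0 (pi/2)) (\<lambda>s. y / rr y t * (dirderiv \<psi> (0,1) (x, rr y t * sin s) * sin s ^ Suc k))) (at y within ?U)"
  proof (rule leibniz_rule_field_derivative[where fx="\<lambda>y s. y / rr y t * (dirderiv \<psi> (0,1) (x, rr y t * sin s) * sin s ^ Suc k)"])
    fix z s assume z: "z \<in> ?U"
    have g: "((\<lambda>y. rr y t * sin s) has_real_derivative z / rr z t * sin s) (at z)"
      by (rule DERIV_cmult_right[OF rr_dy]) (use z in auto)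
    have d: "((\<lambda>y. \<psi> (x, rr y t * sin s)) has_real_derivative dirderiv \<psi> (0,1) (x, rr z t * sin s) * (z / rr z t * sin s)) (at z)"
      using DERIV_chain2[OF psi_v[OF assms(1), of x "rr z t * sin s"] g] by simp
    show "((\<lambda>y. \<psi> (x, rr y t * sin s) * sin s ^ k) has_field_derivative z / rr z t * (dirderiv \<psi> (0,1) (x, rr z t * sin s) * sin s ^ Suc k)) (at z within ?U)"
      by (rule has_field_derivative_at_within, rule DERIV_cong[OF DERIV_cmult_right[OF d, of "sin s ^ k"]]) (simp add: algebra_simps)
  next
    fix h
    show "(\<lambda>s. \<psi> (x, rr h t * sin s) * sin s ^ k) integrable_on cbox 0 (pi/2)"
      by (intro integrable_continuous continuous_intros cont_comp_UNIV[OF smooth_cont[OF assms(1)]])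
  next
    have "continuous_on (?U \<times> cbox 0 (pi/2)) (\<lambda>q. fst q / rr (fst q) t * (dirderiv \<psi> (0,1) (x, rr (fst q) t * sin (snd q)) * sin (snd q) ^ Suc k))"
      apply (intro continuous_intros cont_comp_UNIV[OF c])
      using rr_pos by fastforce
    then show "continuous_on (?U \<times> cbox 0 (pi/2)) (\<lambda>(y, s). y / rr y t * (dirderiv \<psi> (0,1) (x, rr y t * sin s) * sin s ^ Suc k))"
      unfolding case_prod_beta' .
  qed (use assms in auto)
  then have "((\<lambda>y. integral (cbox 0 (pi/2)) (\<lambda>s. \<psi> (x, rr y t * sin s) * sin s ^ k)) has_field_derivative
      integral (cbox 0 (pi/2)) (\<lambda>s. y / rr y t * (dirderiv \<psi> (0,1) (x, rr y t * sin s) * sin s ^ Suc k))) (at y)"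
    using at_within_open[of y ?U] assms by auto
  then show ?thesis unfolding II_def by (simp add: cbox_interval)
qed

lemma II_dt:
  assumes "smooth_on UNIV \<psi>" "y > \<bar>t\<bar>"
  shows "((\<lambda>t. II \<psi> k x y t) has_real_derivative - t / rr y t * II (dirderiv \<psi> (0,1)) (Suc k) x y t) (at t)"
proof -
  let ?U = "{-y<..<y}"
  have c: "continuous_on UNIV (dirderiv \<psi> (0,1))" using smooth_cont[OF smooth_dir[OF assms(1) basis_v]] .
  have "((\<lambda>t. integral (cbox 0 (pi/2)) (\<lambda>s. \<psi> (x, rr y t * sin s) * sin s ^ k)) has_field_derivative
      integral (cbox 0 (pi/2)) (\<lambda>s. - t / rr y t * (dirderiv \<psi> (0,1) (x, rr y t * sin s) * sin s ^ Suc k))) (at t within ?U)"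
  proof (rule leibniz_rule_field_derivative[where fx="\<lambda>t s. - t / rr y t * (dirderiv \<psi> (0,1) (x, rr y t * sin s) * sin s ^ Suc k)"])
    fix z s assume z: "z \<in> ?U"
    have g: "((\<lambda>t. rr y t * sin s) has_real_derivative - z / rr y z * sin s) (at z)"
      by (rule DERIV_cmult_right[OF rr_dt]) (use z in auto)
    have d: "((\<lambda>t. \<psi> (x, rr y t * sin s)) has_real_derivative dirderiv \<psi> (0,1) (x, rr y z * sin s) * (- z / rr y z * sin s)) (at z)"
      using DERIV_chain2[OF psi_v[OF assms(1), of x "rr y z * sin s"] g] by simp
    show "((\<lambda>t. \<psi> (x, rr y t * sin s) * sin s ^ k) has_field_derivative - z / rr y z * (dirderiv \<psi> (0,1) (x, rr y z * sin s) * sin s ^ Suc k)) (at z within ?U)"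
      by (rule has_field_derivative_at_within, rule DERIV_cong[OF DERIV_cmult_right[OF d, of "sin s ^ k"]]) (simp add: algebra_simps)
  next
    fix h
    show "(\<lambda>s. \<psi> (x, rr y h * sin s) * sin s ^ k) integrable_on cbox 0 (pi/2)"
      by (intro integrable_continuous continuous_intros cont_comp_UNIV[OF smooth_cont[OF assms(1)]])
  next
    have "continuous_on (?U \<times> cbox 0 (pi/2)) (\<lambda>q. - fst q / rr y (fst q) * (dirderiv \<psi> (0,1) (x, rr y (fst q) * sin (snd q)) * sin (snd q) ^ Suc k))"
      apply (intro continuous_intros cont_comp_UNIV[OF c])
      using rr_pos' by fastforce
    then show "continuous_on (?U \<times> cbox 0 (pi/2)) (\<lambda>(t, s). - t / rr y t * (dirderiv \<psi> (0,1) (x, rr y t * sin s) * sin s ^ Suc k))"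
      unfolding case_prod_beta' .
  qed (use assms in auto)
  then have "((\<lambda>t. integral (cbox 0 (pi/2)) (\<lambda>s. \<psi> (x, rr y t * sin s) * sin s ^ k)) has_field_derivative
      integral (cbox 0 (pi/2)) (\<lambda>s. - t / rr y t * (dirderiv \<psi> (0,1) (x, rr y t * sin s) * sin s ^ Suc k))) (at t)"
    using at_within_open[of t ?U] assms by (auto simp: abs_less_iff)
  then show ?thesis unfolding II_def by (simp add: cbox_interval)
qed




inductive alg :: "(real \<times> real \<Rightarrow> real) \<Rightarrow> bool" where
  alg_mult: "alg f \<Longrightarrow> alg g \<Longrightarrow> alg (\<lambda>q. f q * g q)"
| alg_add: "alg f \<Longrightarrow> alg g \<Longrightarrow> alg (\<lambda>q. f q + g q)"
| alg_const: "alg (\<lambda>q. a)"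
| alg_fst: "alg (\<lambda>q. fst q)"
| alg_snd: "alg (\<lambda>q. snd q)"
| alg_inv: "alg (\<lambda>q. 1 / rr (fst q) (snd q))"

lemma alg_cont: "alg c \<Longrightarrow> continuous_on {q. fst q > \<bar>snd q\<bar>} c"
proof (induction rule: alg.induct)
  case (alg_mult f g)
  then show ?case by (intro continuous_on_mult) auto
next
  case (alg_add f g)
  then show ?case by (intro continuous_on_add) auto
next
  case (alg_inv)
  show ?case
    apply (intro continuous_intros)
    using rr_pos by force
qed (auto intro!: continuous_intros)

lemma inv_dy:
  assumes h: "y > \<bar>t\<bar>"
  shows "((\<lambda>y. 1 / rr y t) has_real_derivative (-1 * y) * (1 / rr y t * (1 / rr y t * (1 / rr y t)))) (at y)"
proof -
  have r: "rr y t \<noteq> 0" using rr_pos[OF h] by simp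
  show ?thesis
    apply (rule DERIV_cong[OF DERIV_inverse_fun[OF rr_dy[OF h] r, unfolded inverse_eq_divide]])
    using r by (simp add: field_simps power2_eq_square)
qed

lemma inv_dt:
  assumes h: "y > \<bar>t\<bar>"
  shows "((\<lambda>t. 1 / rr y t) has_real_derivative t * (1 / rr y t * (1 / rr y t * (1 / rr y t)))) (at t)"
proof -
  have r: "rr y t \<noteq> 0" using rr_pos[OF h] by simp
  show ?thesis
    apply (rule DERIV_cong[OF DERIV_inverse_fun[OF rr_dt[OF h] r, unfolded inverse_eq_divide]])
    using r by (simp add: field_simps power2_eq_square)
qed

definition dYT where
  "dYT c cy ct \<longleftrightarrow> (\<forall>y t. y > \<bar>t\<bar> \<longrightarrow> ((\<lambda>y'. c (y',t)) has_real_derivative cy (y,t)) (at y)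
        \<and> ((\<lambda>t'. c (y,t')) has_real_derivative ct (y,t)) (at t))"

lemma alg_deriv: "alg c \<Longrightarrow> \<exists>cy ct. alg cy \<and> alg ct \<and> dYT c cy ct"
proof (induction rule: alg.induct)
  case (alg_mult f g)
  then obtain fy ft gy gt where f: "alg fy" "alg ft" "dYT f fy ft" and g: "alg gy" "alg gt" "dYT g gy gt"
    by blast
  show ?case
  proof (intro exI conjI)
    show "alg (\<lambda>q. fy q * g q + gy q * f q)" "alg (\<lambda>q. ft q * g q + gt q * f q)"
      using f g alg_mult.hyps by (auto intro!: alg.intros)
    show "dYT (\<lambda>q. f q * g q) (\<lambda>q. fy q * g q + gy q * f q) (\<lambda>q. ft q * g q + gt q * f q)"
      using f(3) g(3) unfolding dYT_def by (auto intro!: DERIV_mult)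
  qed
next
  case (alg_add f g)
  then obtain fy ft gy gt where f: "alg fy" "alg ft" "dYT f fy ft" and g: "alg gy" "alg gt" "dYT g gy gt"
    by blast
  show ?case
  proof (intro exI conjI)
    show "alg (\<lambda>q. fy q + gy q)" "alg (\<lambda>q. ft q + gt q)"
      using f g by (auto intro!: alg.intros)
    show "dYT (\<lambda>q. f q + g q) (\<lambda>q. fy q + gy q) (\<lambda>q. ft q + gt q)"
      using f(3) g(3) unfolding dYT_def by (auto intro!: DERIV_add)
  qed
next
  case (alg_const a)
  show ?case
    by (rule exI[of _ "\<lambda>q. 0"], rule exI[of _ "\<lambda>q. 0"]) (auto simp: dYT_def intro: alg.alg_const)
next
  case alg_fst
  show ?case
    by (rule exI[of _ "\<lambda>q. 1"], rule exI[of _ "\<lambda>q. 0"]) (auto simp: dYT_def intro: alg.alg_const)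
next
  case alg_snd
  show ?case
    by (rule exI[of _ "\<lambda>q. 0"], rule exI[of _ "\<lambda>q. 1"]) (auto simp: dYT_def intro: alg.alg_const)
next
  case alg_inv
  show ?case
  proof (intro exI conjI)
    show "alg (\<lambda>q. (-1 * fst q) * (1 / rr (fst q) (snd q) * (1 / rr (fst q) (snd q) * (1 / rr (fst q) (snd q)))))"
      by (intro alg.alg_mult alg.alg_const alg.alg_fst alg.alg_inv)
    show "alg (\<lambda>q. snd q * (1 / rr (fst q) (snd q) * (1 / rr (fst q) (snd q) * (1 / rr (fst q) (snd q)))))"
      by (intro alg.alg_mult alg.alg_const alg.alg_snd alg.alg_inv)
    show "dYT (\<lambda>q. 1 / rr (fst q) (snd q))
      (\<lambda>q. (-1 * fst q) * (1 / rr (fst q) (snd q) * (1 / rr (fst q) (snd q) * (1 / rr (fst q) (snd q)))))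
      (\<lambda>q. snd q * (1 / rr (fst q) (snd q) * (1 / rr (fst q) (snd q) * (1 / rr (fst q) (snd q)))))"
      unfolding dYT_def using inv_dy inv_dt by simp
  qed
qed

definition Tm :: "((real^'m) \<times> real \<Rightarrow> real) \<Rightarrow> (real \<times> real \<Rightarrow> real) \<Rightarrow> nat \<Rightarrow> ((real^'m) \<times> real) \<times> real \<Rightarrow> real" where
 "Tm \<psi> c k p = c (snd (fst p), snd p) * II \<psi> k (fst (fst p)) (snd (fst p)) (snd p)"

definition goodL where "goodL L = (\<forall>x\<in>set L. smooth_on UNIV (fst x) \<and> alg (fst (snd x)))"

definition SL where "SL L p = (\<Sum>x\<leftarrow>L. Tm (fst x) (fst (snd x)) (snd (snd x)) p)"

definition Dom :: "(((real^'m) \<times> real) \<times> real) set" where "Dom = {p. snd (fst p) > \<bar>snd p\<bar>}"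

lemma open_Dom: "open Dom"
  unfolding Dom_def by (intro open_Collect_less continuous_intros)

lemma Tm_cont:
  assumes "smooth_on UNIV \<psi>" "alg c"
  shows "continuous_on Dom (Tm \<psi> c k)"
proof -
  have "continuous_on Dom (\<lambda>p::((real^'m) \<times> real) \<times> real. c (snd (fst p), snd p))"
    by (rule continuous_on_compose2[OF alg_cont[OF assms(2)]]) (auto simp: Dom_def intro!: continuous_intros)
  then show ?thesis unfolding Tm_def
    by (intro continuous_on_mult II_cont assms)
qed

lemma SL_cont: "goodL L \<Longrightarrow> continuous_on Dom (SL L)"
proof (induction L)
  case Nil
  then show ?case by (simp add: SL_def)
next
  case (Cons a L)
  have "SL (a # L) = (\<lambda>p. Tm (fst a) (fst (snd a)) (snd (snd a)) p + SL L p)"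
    by (auto simp: SL_def)
  then show ?case using Cons by (auto simp: goodL_def intro!: continuous_on_add Tm_cont)
qed

lemma basis_cases:
  assumes "b \<in> (Basis :: (((real^'m) \<times> real) \<times> real) set)"
  shows "(\<exists>e\<in>Basis. b = ((e,0),0)) \<or> b = ((0,1),0) \<or> b = ((0,0),1)"
  using assms by (auto simp: Basis_prod_def zero_prod_def)

lemma shift0: "(f has_real_derivative D) (at y) \<Longrightarrow> ((\<lambda>h. f (y + h)) has_real_derivative D) (at 0)"
  using DERIV_shift[of f D 0 y] by (simp add: add.commute)




lemma Tm_deriv:
  fixes \<psi> :: "(real^'m) \<times> real \<Rightarrow> real"
  assumes sm: "smooth_on UNIV \<psi>" and ac: "alg c" and b: "b \<in> Basis"
  shows "\<exists>L. goodL L \<and> (\<forall>p\<in>Dom. ((\<lambda>h. Tm \<psi> c k (p + h *\<^sub>R b)) has_real_derivative SL L p) (at 0))"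
proof -
  obtain cy ct where cy: "alg cy" and ct: "alg ct" and dc: "dYT c cy ct"
    using alg_deriv[OF ac] by blast
  have smv: "smooth_on UNIV (dirderiv \<psi> (0,1))" by (rule smooth_dir[OF sm basis_v])
  from basis_cases[OF b] show ?thesis
  proof (elim disjE bexE)
    fix e assume e: "e \<in> Basis" and be: "b = ((e,0),0)"
    show ?thesis
    proof (intro exI conjI ballI)
      show "goodL [(dirderiv \<psi> (e,0), c, k)]"
        using smooth_dir[OF sm basis_e[OF e]] ac by (simp add: goodL_def)
      fix p :: "((real^'m) \<times> real) \<times> real" assume p: "p \<in> Dom"
      have "((\<lambda>h. c (snd (fst p), snd p) * II \<psi> k (fst (fst p) + h *\<^sub>R e) (snd (fst p)) (snd p)) has_real_derivative
          c (snd (fst p), snd p) * II (dirderiv \<psi> (e,0)) k (fst (fst p) + 0 *\<^sub>R e) (snd (fst p)) (snd p)) (at 0)"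
        by (intro DERIV_cmult II_dx sm e)
      then show "((\<lambda>h. Tm \<psi> c k (p + h *\<^sub>R b)) has_real_derivative SL [(dirderiv \<psi> (e,0), c, k)] p) (at 0)"
        by (simp add: Tm_def SL_def be)
    qed
  next
    assume be: "b = ((0,1),0)"
    let ?L = "[(\<psi>, cy, k), (dirderiv \<psi> (0,1), \<lambda>q. c q * fst q * (1 / rr (fst q) (snd q)), Suc k)]"
    show ?thesis
    proof (intro exI conjI ballI)
      show "goodL ?L"
        using sm smv cy ac alg_mult[OF alg_mult[OF ac alg_fst] alg_inv] by (simp add: goodL_def)
      fix p :: "((real^'m) \<times> real) \<times> real" assume p: "p \<in> Dom"
      define x where "x = fst (fst p)"
      define y where "y = snd (fst p)"
      define t where "t = snd p"
      have yt: "y > \<bar>t\<bar>" using p by (simp add: Dom_def y_def t_def)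
      have "((\<lambda>y'. c (y', t) * II \<psi> k x y' t) has_real_derivative
          cy (y,t) * II \<psi> k x y t + (y / rr y t * II (dirderiv \<psi> (0,1)) (Suc k) x y t) * c (y,t)) (at y)"
        using dc yt unfolding dYT_def by (intro DERIV_mult II_dy sm) auto
      from shift0[OF this]
      show "((\<lambda>h. Tm \<psi> c k (p + h *\<^sub>R b)) has_real_derivative SL ?L p) (at 0)"
        by (simp add: Tm_def SL_def be x_def y_def t_def algebra_simps)
    qed
  next
    assume be: "b = ((0,0),1)"
    let ?L = "[(\<psi>, ct, k), (dirderiv \<psi> (0,1), \<lambda>q. c q * (-1 * snd q) * (1 / rr (fst q) (snd q)), Suc k)]"
    show ?thesis
    proof (intro exI conjI ballI)
      show "goodL ?L"
        using sm smv ct ac alg_mult[OF alg_mult[OF ac alg_mult[OF alg_const[of "-1"] alg_snd]] alg_inv] by (simp add: goodL_def)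
      fix p :: "((real^'m) \<times> real) \<times> real" assume p: "p \<in> Dom"
      define x where "x = fst (fst p)"
      define y where "y = snd (fst p)"
      define t where "t = snd p"
      have yt: "y > \<bar>t\<bar>" using p by (simp add: Dom_def y_def t_def)
      have "((\<lambda>t'. c (y, t') * II \<psi> k x y t') has_real_derivative
          ct (y,t) * II \<psi> k x y t + (- t / rr y t * II (dirderiv \<psi> (0,1)) (Suc k) x y t) * c (y,t)) (at t)"
        using dc yt unfolding dYT_def by (intro DERIV_mult II_dt sm) auto
      from shift0[OF this]
      show "((\<lambda>h. Tm \<psi> c k (p + h *\<^sub>R b)) has_real_derivative SL ?L p) (at 0)"
        by (simp add: Tm_def SL_def be x_def y_def t_def algebra_simps)
    qed
  qed
qed

lemma SL_Cons: "SL (a # L) p = Tm (fst a) (fst (snd a)) (snd (snd a)) p + SL L p"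
  by (simp add: SL_def)

lemma SL_append: "SL (L1 @ L2) p = SL L1 p + SL L2 p"
  by (simp add: SL_def)

lemma SL_deriv:
  fixes b :: "((real^'m) \<times> real) \<times> real"
  assumes "goodL L" "b \<in> Basis"
  shows "\<exists>L'. goodL L' \<and> (\<forall>p\<in>Dom. ((\<lambda>h. SL L (p + h *\<^sub>R b)) has_real_derivative SL L' p) (at 0))"
  using assms(1)
proof (induction L)
  case Nil
  show ?case by (rule exI[of _ "[]"]) (simp add: SL_def goodL_def)
next
  case (Cons a L)
  then have ga: "smooth_on UNIV (fst a)" "alg (fst (snd a))" and gL: "goodL L"
    by (auto simp: goodL_def)
  obtain L1 where L1: "goodL L1" "\<forall>p\<in>Dom. ((\<lambda>h. Tm (fst a) (fst (snd a)) (snd (snd a)) (p + h *\<^sub>R b)) has_real_derivative SL L1 p) (at 0)"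
    using Tm_deriv[OF ga assms(2)] by blast
  obtain L2 where L2: "goodL L2" "\<forall>p\<in>Dom. ((\<lambda>h. SL L (p + h *\<^sub>R b)) has_real_derivative SL L2 p) (at 0)"
    using Cons.IH[OF gL] by blast
  show ?case
  proof (intro exI conjI ballI)
    show "goodL (L1 @ L2)" using L1 L2 by (auto simp: goodL_def)
    fix p :: "((real^'m) \<times> real) \<times> real" assume "p \<in> Dom"
    then show "((\<lambda>h. SL (a # L) (p + h *\<^sub>R b)) has_real_derivative SL (L1 @ L2) p) (at 0)"
      unfolding SL_Cons SL_append using L1 L2 by (intro DERIV_add) auto
  qed
qed

definition QQ where "QQ f \<longleftrightarrow> (\<exists>L. goodL L \<and> (\<forall>p\<in>Dom. f p = SL L p))"

lemma QQ_cont: "QQ f \<Longrightarrow> continuous_on Dom f"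
  unfolding QQ_def using SL_cont continuous_on_cong by metis

lemma QQ_deriv:
  assumes "QQ f" "b \<in> Basis"
  shows "(\<forall>p\<in>Dom. (\<lambda>h. f (p + h *\<^sub>R b)) differentiable (at 0)) \<and> QQ (dirderiv f b)"
proof -
  obtain L where L: "goodL L" "\<forall>p\<in>Dom. f p = SL L p" using assms(1) QQ_def by blast
  obtain L' where L': "goodL L'" "\<forall>p\<in>Dom. ((\<lambda>h. SL L (p + h *\<^sub>R b)) has_real_derivative SL L' p) (at 0)"
    using SL_deriv[OF L(1) assms(2)] by blast
  have D: "((\<lambda>h. f (p + h *\<^sub>R b)) has_real_derivative SL L' p) (at 0)" if p: "p \<in> Dom" for p
  proof (rule has_field_derivative_transform_within_open[OF L'(2)[rule_format, OF p]])
    show "open {h::real. p + h *\<^sub>R b \<in> Dom}"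
      unfolding Dom_def by (simp, intro open_Collect_less continuous_intros)
    show "0 \<in> {h::real. p + h *\<^sub>R b \<in> Dom}" using p by simp
    show "\<And>h. h \<in> {h::real. p + h *\<^sub>R b \<in> Dom} \<Longrightarrow> SL L (p + h *\<^sub>R b) = f (p + h *\<^sub>R b)"
      using L(2) by simp
  qed
  show ?thesis
  proof
    show "\<forall>p\<in>Dom. (\<lambda>h. f (p + h *\<^sub>R b)) differentiable (at 0)"
      using D unfolding has_field_derivative_def differentiable_def by blast
    show "QQ (dirderiv f b)"
      unfolding QQ_def dirderiv_def using L'(1) D DERIV_imp_deriv by blast
  qed
qed

lemma QQ_Ck: "QQ f \<Longrightarrow> Ck_on k Dom f"
proof (induction k arbitrary: f)
  case 0
  then show ?case using QQ_cont by simp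
next
  case (Suc k)
  then show ?case using QQ_cont[OF Suc.prems] QQ_deriv[OF Suc.prems] Suc.IH by auto
qed




lemma sum_Basis_pr:
  "(\<Sum>b\<in>(Basis::((real^'m) \<times> real) set). f b) = (\<Sum>e\<in>Basis. f (e,0)) + f (0,1)"
  unfolding Basis_prod_def
  by (subst sum.union_disjoint) (auto simp: sum.reindex inj_on_def)

lemma ibp:
  fixes \<phi> :: "(real^'m) \<times> real \<Rightarrow> real"
  assumes sm: "smooth_on UNIV \<phi>" and neu: "dirderiv \<phi> (0,1) (x,0) = 0"
  shows "\<rho> * (integral {0..pi/2} (\<lambda>s. dirderiv (dirderiv \<phi> (0,1)) (0,1) (x, \<rho> * sin s) * sin s ^ 0)
           - integral {0..pi/2} (\<lambda>s. dirderiv (dirderiv \<phi> (0,1)) (0,1) (x, \<rho> * sin s) * sin s ^ 2))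
         = integral {0..pi/2} (\<lambda>s. dirderiv \<phi> (0,1) (x, \<rho> * sin s) * sin s ^ 1)"
proof -
  define pv where "pv = dirderiv \<phi> (0,1)"
  define pvv where "pvv = dirderiv pv (0,1)"
  have smv: "smooth_on UNIV pv" unfolding pv_def by (rule smooth_dir[OF sm basis_v])
  have smvv: "smooth_on UNIV pvv" unfolding pvv_def by (rule smooth_dir[OF smv basis_v])
  have cv: "continuous_on UNIV pv" by (rule smooth_cont[OF smv])
  have cvv: "continuous_on UNIV pvv" by (rule smooth_cont[OF smvv])
  define G where "G s = cos s * pv (x, \<rho> * sin s)" for s
  define G' where "G' s = - sin s * pv (x, \<rho> * sin s) + cos s * (pvv (x, \<rho> * sin s) * (\<rho> * cos s))" for s
  have dG: "(G has_real_derivative G' s) (at s)" for s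
  proof -
    have a: "((\<lambda>s. \<rho> * sin s) has_real_derivative \<rho> * cos s) (at s)"
      by (auto intro!: derivative_eq_intros)
    have b: "((\<lambda>s. pv (x, \<rho> * sin s)) has_real_derivative pvv (x, \<rho> * sin s) * (\<rho> * cos s)) (at s)"
      using DERIV_chain2[OF psi_v[OF smv, of x "\<rho> * sin s"] a] unfolding pvv_def by simp
    have "(G has_real_derivative (- sin s) * pv (x, \<rho> * sin s) + pvv (x, \<rho> * sin s) * (\<rho> * cos s) * cos s) (at s)"
      unfolding G_def by (rule DERIV_mult[OF DERIV_cos b])
    then show ?thesis unfolding G'_def by (simp add: algebra_simps)
  qed
  have "(G' has_integral (G (pi/2) - G 0)) {0..pi/2}"
    by (rule fundamental_theorem_of_calculus)
       (auto simp: has_real_derivative_iff_has_vector_derivative[symmetric] intro: has_field_derivative_at_within dG)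
  moreover have "G (pi/2) - G 0 = 0"
    using neu by (simp add: G_def pv_def)
  ultimately have i0: "(G' has_integral 0) {0..pi/2}" by simp
  let ?f0 = "\<lambda>s. pvv (x, \<rho> * sin s) * sin s ^ 0"
  let ?f2 = "\<lambda>s. pvv (x, \<rho> * sin s) * sin s ^ 2"
  let ?f1 = "\<lambda>s. pv (x, \<rho> * sin s) * sin s ^ 1"
  have int: "?f0 integrable_on {0..pi/2}" "?f2 integrable_on {0..pi/2}" "?f1 integrable_on {0..pi/2}"
    unfolding cbox_interval[symmetric]
    by (intro integrable_continuous continuous_intros cont_comp_UNIV[OF cvv] cont_comp_UNIV[OF cv])+
  have "((\<lambda>s. \<rho> * (?f0 s - ?f2 s) - ?f1 s) has_integral
        \<rho> * (integral {0..pi/2} ?f0 - integral {0..pi/2} ?f2) - integral {0..pi/2} ?f1) {0..pi/2}"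
    by (intro has_integral_diff has_integral_mult_right integrable_integral int)
  moreover have "(\<lambda>s. \<rho> * (?f0 s - ?f2 s) - ?f1 s) = G'"
  proof
    fix s :: real
    have c: "sin s ^ 2 + cos s ^ 2 = 1" by (rule sin_cos_squared_add)
    have "\<rho> * (?f0 s - ?f2 s) - ?f1 s - G' s = \<rho> * pvv (x, \<rho> * sin s) * (1 - (sin s ^ 2 + cos s ^ 2))"
      unfolding G'_def power2_eq_square by algebra
    then show "\<rho> * (?f0 s - ?f2 s) - ?f1 s = G' s" using c by simp
  qed
  ultimately have i1: "(G' has_integral \<rho> * (integral {0..pi/2} ?f0 - integral {0..pi/2} ?f2) - integral {0..pi/2} ?f1) {0..pi/2}"
    by simp
  have "\<rho> * (integral {0..pi/2} ?f0 - integral {0..pi/2} ?f2) - integral {0..pi/2} ?f1 = 0"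
    by (rule has_integral_unique[OF i1 i0])
  then show ?thesis unfolding pvv_def pv_def by simp
qed




lemma main_pde:
  fixes \<phi> :: "(real^'m) \<times> real \<Rightarrow> real" and w :: "((real^'m) \<times> real) \<times> real \<Rightarrow> real"
  assumes sm: "smooth_on UNIV \<phi>"
    and harm: "\<And>p. laplacian \<phi> p = 0"
    and neu: "\<And>x. dirderiv \<phi> (0,1) (x,0) = 0"
    and wII: "\<And>x y t. w ((x,y),t) = 1/pi * II \<phi> 0 x y t"
    and yt: "y > \<bar>t\<bar>"
  shows "deriv (deriv (\<lambda>\<tau>. w ((x, y), \<tau>))) t - laplacian (\<lambda>z. w (z, t)) (x, y) = 0"
proof -
  define pv where "pv = dirderiv \<phi> (0,1)"
  define pvv where "pvv = dirderiv pv (0,1)"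
  define pe where "pe e = dirderiv \<phi> (e,0)" for e
  define pee where "pee e = dirderiv (pe e) (e,0)" for e
  have smv: "smooth_on UNIV pv" unfolding pv_def by (rule smooth_dir[OF sm basis_v])
  have smvv: "smooth_on UNIV pvv" unfolding pvv_def by (rule smooth_dir[OF smv basis_v])
  have sme: "smooth_on UNIV (pe e)" if "e \<in> Basis" for e
    unfolding pe_def by (rule smooth_dir[OF sm basis_e[OF that]])
  have smee: "smooth_on UNIV (pee e)" if "e \<in> Basis" for e
    unfolding pee_def by (rule smooth_dir[OF sme[OF that] basis_e[OF that]])
  define r where "r = rr y t"
  have r0: "r > 0" using rr_pos[OF yt] r_def by simp
  have rsq: "r^2 = y^2 - t^2" using rr_sq[OF yt] r_def by simp
  define A0 where "A0 = II pvv 0 x y t"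
  define A1 where "A1 = II pv (Suc 0) x y t"
  define A2 where "A2 = II pvv (Suc (Suc 0)) x y t"
  have ibp': "r * (A0 - A2) = A1"
  proof -
    have n: "dirderiv \<phi> (0,1) (x,0) = 0" by (rule neu)
    show ?thesis
      using ibp[OF sm n, of r]
      unfolding A0_def A1_def A2_def II_def r_def pvv_def pv_def
      by (simp only: numeral_2_eq_2 One_nat_def)
  qed

  let ?U = "{-y<..<y}"
  have tU: "t \<in> ?U" using yt by (simp add: abs_less_iff)
  have wfun: "(\<lambda>\<tau>. w ((x,y),\<tau>)) = (\<lambda>\<tau>. 1/pi * II \<phi> 0 x y \<tau>)" using wII by auto
  define G where "G \<tau> = 1/pi * ((-1 * \<tau>) * (1 / rr y \<tau>) * II pv (Suc 0) x y \<tau>)" for \<tau>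
  have d1: "G \<tau> = deriv (\<lambda>\<tau>. w ((x,y),\<tau>)) \<tau>" if "\<tau> \<in> ?U" for \<tau>
  proof -
    have h: "\<bar>\<tau>\<bar> < y" using that by (simp add: abs_less_iff)
    have "((\<lambda>\<tau>. 1/pi * II \<phi> 0 x y \<tau>) has_real_derivative 1/pi * (- \<tau> / rr y \<tau> * II pv (Suc 0) x y \<tau>)) (at \<tau>)"
      unfolding pv_def by (rule DERIV_cmult[OF II_dt[OF sm h]])
    then have "deriv (\<lambda>\<tau>. w ((x,y),\<tau>)) \<tau> = 1/pi * (- \<tau> / rr y \<tau> * II pv (Suc 0) x y \<tau>)"
      unfolding wfun by (rule DERIV_imp_deriv)
    then show ?thesis unfolding G_def by simp
  qed
  define Vt where "Vt = 1/pi * (- (1/r) * A1 - t^2 / r^3 * A1 + t^2 / r^2 * A2)"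
  have dG: "(G has_real_derivative Vt) (at t)"
    unfolding G_def
    apply (rule DERIV_cong)
     apply (rule DERIV_cmult)
     apply (rule DERIV_mult)
      apply (rule DERIV_mult)
       apply (rule DERIV_cmult[OF DERIV_ident])
      apply (rule inv_dt[OF yt])
     apply (rule II_dt[OF smv yt])
    unfolding Vt_def A1_def A2_def pvv_def r_def[symmetric]
    using r0 by (simp add: field_simps power2_eq_square power3_eq_cube)
  have tt: "deriv (deriv (\<lambda>\<tau>. w ((x, y), \<tau>))) t = Vt"
    by (rule DERIV_imp_deriv, rule has_field_derivative_transform_within_open[OF dG _ tU]) (auto simp: d1)

  define Wt where "Wt = (\<lambda>z. w (z, t))"
  define Hy where "Hy y' = 1/pi * (y' * (1 / rr y' t) * II pv (Suc 0) x y' t)" for y'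
  have dy1: "Hy y' = dirderiv Wt (0,1) (x, y')" if "y' > \<bar>t\<bar>" for y'
  proof -
    have "((\<lambda>y'. 1/pi * II \<phi> 0 x y' t) has_real_derivative 1/pi * (y' / rr y' t * II pv (Suc 0) x y' t)) (at y')"
      unfolding pv_def by (rule DERIV_cmult[OF II_dy[OF sm that]])
    from shift0[OF this]
    have "deriv (\<lambda>h. 1/pi * II \<phi> 0 x (y' + h) t) 0 = 1/pi * (y' / rr y' t * II pv (Suc 0) x y' t)"
      by (rule DERIV_imp_deriv)
    then show ?thesis unfolding Hy_def dirderiv_def Wt_def by (simp add: wII)
  qed
  define Vy where "Vy = 1/pi * (1/r * A1 - y^2 / r^3 * A1 + y^2 / r^2 * A2)"
  have dHy: "(Hy has_real_derivative Vy) (at y)"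
    unfolding Hy_def
    apply (rule DERIV_cong)
     apply (rule DERIV_cmult)
     apply (rule DERIV_mult)
      apply (rule DERIV_mult)
       apply (rule DERIV_ident)
      apply (rule inv_dy[OF yt])
     apply (rule II_dy[OF smv yt])
    unfolding Vy_def A1_def A2_def pvv_def r_def[symmetric]
    using r0 by (simp add: field_simps power2_eq_square power3_eq_cube)
  have yy: "dirderiv (dirderiv Wt (0,1)) (0,1) (x,y) = Vy"
  proof -
    have "dirderiv (dirderiv Wt (0,1)) (0,1) (x,y) = deriv (\<lambda>h. dirderiv Wt (0,1) (x, y + h)) 0"
      by (simp add: dirderiv_def[of "dirderiv Wt (0,1)"])
    also have "\<dots> = Vy"
    proof (rule DERIV_imp_deriv, rule has_field_derivative_transform_within_open[OF shift0[OF dHy]])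
      show "open {h::real. y + h > \<bar>t\<bar>}" by (intro open_Collect_less continuous_intros)
      show "(0::real) \<in> {h::real. y + h > \<bar>t\<bar>}" using yt by simp
      show "\<And>h. h \<in> {h::real. y + h > \<bar>t\<bar>} \<Longrightarrow> Hy (y + h) = dirderiv Wt (0,1) (x, y + h)"
        using dy1 by simp
    qed
    finally show ?thesis .
  qed

  have de1: "dirderiv Wt (e,0) = (\<lambda>z. 1/pi * II (pe e) 0 (fst z) (snd z) t)" if e: "e \<in> Basis" for e
  proof
    fix z :: "(real^'m) \<times> real"
    have "((\<lambda>h. 1/pi * II \<phi> 0 (fst z + h *\<^sub>R e) (snd z) t) has_real_derivative 1/pi * II (pe e) 0 (fst z + 0 *\<^sub>R e) (snd z) t) (at 0)"
      unfolding pe_def by (rule DERIV_cmult[OF II_dx[OF sm e]])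
    then have "deriv (\<lambda>h. 1/pi * II \<phi> 0 (fst z + h *\<^sub>R e) (snd z) t) 0 = 1/pi * II (pe e) 0 (fst z) (snd z) t"
      by (simp add: DERIV_imp_deriv)
    then show "dirderiv Wt (e,0) z = 1/pi * II (pe e) 0 (fst z) (snd z) t"
      unfolding dirderiv_def Wt_def by (cases z) (simp add: wII)
  qed
  have ee: "dirderiv (dirderiv Wt (e,0)) (e,0) (x,y) = 1/pi * II (pee e) 0 x y t" if e: "e \<in> Basis" for e
  proof -
    have "((\<lambda>h. 1/pi * II (pe e) 0 (x + h *\<^sub>R e) y t) has_real_derivative 1/pi * II (pee e) 0 (x + 0 *\<^sub>R e) y t) (at 0)"
      unfolding pee_def by (rule DERIV_cmult[OF II_dx[OF sme[OF e] e]])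
    then have "deriv (\<lambda>h. 1/pi * II (pe e) 0 (x + h *\<^sub>R e) y t) 0 = 1/pi * II (pee e) 0 x y t"
      by (simp add: DERIV_imp_deriv)
    then show ?thesis unfolding de1[OF e] dirderiv_def[of "\<lambda>z. 1/pi * II (pe e) 0 (fst z) (snd z) t"] by simp
  qed

  have harm': "(\<Sum>e\<in>Basis. pee e z) = - pvv z" for z
  proof -
    have "laplacian \<phi> z = (\<Sum>e\<in>Basis. pee e z) + pvv z"
      unfolding laplacian_def sum_Basis_pr pee_def pe_def pvv_def pv_def ..
    then show ?thesis using harm[of z] by simp
  qed
  have sumII: "(\<Sum>e\<in>Basis. II (pee e) 0 x y t) = - A0"
  proof -
    have "(\<Sum>e\<in>Basis. II (pee e) 0 x y t) = integral {0..pi/2} (\<lambda>s. \<Sum>e\<in>Basis. pee e (x, rr y t * sin s) * sin s ^ 0)"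
      unfolding II_def
      apply (rule integral_sum[symmetric])
       apply simp
      apply (rule II_integrable, rule smooth_cont, rule smee)
      apply assumption
      done
    also have "\<dots> = integral {0..pi/2} (\<lambda>s. - (pvv (x, rr y t * sin s) * sin s ^ 0))"
      using harm' by simp
    also have "\<dots> = - A0" unfolding A0_def II_def by (rule integral_neg)
    finally show ?thesis .
  qed
  have lap: "laplacian (\<lambda>z. w (z, t)) (x, y) = 1/pi * (- A0) + Vy"
  proof -
    have "laplacian (\<lambda>z. w (z, t)) (x, y) = (\<Sum>e\<in>Basis. dirderiv (dirderiv Wt (e,0)) (e,0) (x,y)) + dirderiv (dirderiv Wt (0,1)) (0,1) (x,y)"
      unfolding laplacian_def sum_Basis_pr Wt_def ..
    also have "\<dots> = (\<Sum>e\<in>Basis. 1/pi * II (pee e) 0 x y t) + Vy"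
      using ee yy by simp
    also have "\<dots> = 1/pi * (- A0) + Vy"
      unfolding sum_distrib_left[symmetric] sumII ..
    finally show ?thesis .
  qed
  have y2: "y^2 = r^2 + t^2" using rsq by simp
  show ?thesis
    unfolding tt lap Vt_def Vy_def y2 ibp'[symmetric]
    using r0 by (simp add: field_simps power2_eq_square power3_eq_cube)
qed


theorem lemma2:
  fixes \<phi> :: "(real ^ 'm) \<times> real \<Rightarrow> real"
    and w :: "((real ^ 'm) \<times> real) \<times> real \<Rightarrow> real"
  assumes smooth: "smooth_on UNIV \<phi>"
    and harmonic: "\<And>p. laplacian \<phi> p = 0"
    and neumann: "\<And>x. deriv (\<lambda>y. \<phi> (x, y)) 0 = 0"
    and w_def: "\<And>x y t. w ((x, y), t) =
        (1 / pi) * integral {0..pi/2} (\<lambda>s. \<phi> (x, sqrt (y\<^sup>2 - t\<^sup>2) * sin s))"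
  shows "smooth_on {((x, y), t). y > \<bar>t\<bar>} w \<and>
    (\<forall>x y t. y > \<bar>t\<bar> \<longrightarrow>
       deriv (deriv (\<lambda>\<tau>. w ((x, y), \<tau>))) t - laplacian (\<lambda>z. w (z, t)) (x, y) = 0)"
proof -
  have wII: "\<And>x y t. w ((x,y),t) = 1/pi * II \<phi> 0 x y t"
    by (simp add: w_def II_def rr_def)
  have neu: "\<And>x. dirderiv \<phi> (0,1) (x,0) = 0"
    using neumann by (simp add: dirderiv_def)
  have dom: "{((x, y), t). y > \<bar>t\<bar>} = (Dom :: (((real^'m) \<times> real) \<times> real) set)"
    by (auto simp: Dom_def)
  have Q: "QQ w"
    unfolding QQ_def
  proof (intro exI conjI ballI)
    show "goodL [(\<phi>, \<lambda>q. 1/pi, 0)]" using smooth by (simp add: goodL_def alg_const)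
    fix p :: "((real^'m) \<times> real) \<times> real"
    obtain a t where p: "p = (a,t)" by fastforce
    obtain x y where a: "a = (x,y)" by fastforce
    show "w p = SL [(\<phi>, \<lambda>q. 1/pi, 0)] p" by (simp add: p a SL_def Tm_def wII)
  qed
  show ?thesis
  proof
    show "smooth_on {((x, y), t). y > \<bar>t\<bar>} w"
      unfolding dom smooth_on_def using QQ_Ck[OF Q] by blast
    show "\<forall>x y t. y > \<bar>t\<bar> \<longrightarrow>
       deriv (deriv (\<lambda>\<tau>. w ((x, y), \<tau>))) t - laplacian (\<lambda>z. w (z, t)) (x, y) = 0"
      using main_pde[OF smooth harmonic neu wII] by blast
  qed
qed

end
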